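(* Let $S$ and $T$ be trees. For each shuffle $A$ of $S$ and $T$, the edge labelling gives an injective map of posets $E(A)\hookrightarrow E(S)\times E(T)$ and hence an embedding $BA\hookrightarrow B(E(S)\times E(T))\cong BS\times BT$. Then $$BS\times BT=\bigcup_{A\in Sh(S,T)} BA,$$ i.e. the images of these embeddings jointly cover $BS\times BT$. Equivalently at the simplicial level, every chain $(s_0,t_0)\le\dots\le(s_n,t_n)$ in the product poset $E(S)\times E(T)$ is contained in $E(A)$ for some shuffle $A$.
   Context: A tree is a finite connected graph without cycles whose external edges are open. One external edge is the root; the others are leaves. Each vertex has one outgoing edge (towards the root) and a strictly positive number of incoming edges. No planar structure. $E(T)$ is the edge set partially ordered by $e\le e'$ iff $e$ lies on the path from $e'$ to the root. For a finite poset $P$, its classifying space $B(P)$ is the geometric realization of its nerve (the simplicial complex of chains of $P$); $BT:=B(E(T))$. Concretely, a point of $BT$ is a function $\lambda:E(T)\to[0,1]$ with $\sum_e\lambda(e)=1$ whose support lies in a single chain (branch), with the subspace topology from $[0,1]^{E(T)}$. There is a natural homeomorphism $B(P\times Q)\cong B(P)\times B(Q)$ for finite posets $P,Q$. Shuffle: for trees $S,T$ with root edges $r_S,r_T$, a shuffle is a tree $A$ with edges labelled by pairs $(s,t)\in E(S)\times E(T)$ such that: (1) the root of $A$ is labelled $(r_S,r_T)$; (2) the labelling restricts to a bijection from leaves of $A$ onto $\mathrm{Leaves}(S)\times\mathrm{Leaves}(T)$; (3) if an edge labelled $(s,t)$ is not a leaf, the incoming edges of the vertex of $A$ above it are labelled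 either exactly $(s_1,t),\dots,(s_m,t)$ for $s_1,\dots,s_m$ the edges immediately above $s$ in $S$, or exactly $(s,t_1),\dots,(s,t_n)$ for $t_1,\dots,t_n$ the edges immediately above $t$ in $T$. Shuffles are taken up to isomorphism of labelled trees; $Sh(S,T)$ is the set of shuffles. *)

theory Defs
  imports Main
begin

text \<open>A (non-planar, rooted) tree is encoded by its set of edges, its root edge and,
for every non-root edge c, the edge par c: the outgoing edge of the vertex at
the lower end of c.\<close>

record 'e ptree =
  edges :: "'e set"
  rootE :: 'e
  par   :: "'e \<Rightarrow> 'e"

definition up_rel :: "'e ptree \<Rightarrow> ('e \<times> 'e) set" where
  "up_rel T = {(par T c, c) | c. c \<in> edges T - {rootE T}}"

definition is_tree :: "'e ptree \<Rightarrow> bool" where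
  "is_tree T \<longleftrightarrow> finite (edges T) \<and> rootE T \<in> edges T
     \<and> (\<forall>c \<in> edges T - {rootE T}. par T c \<in> edges T)
     \<and> (\<forall>e \<in> edges T. (rootE T, e) \<in> (up_rel T)\<^sup>*)"

definition edge_le :: "'e ptree \<Rightarrow> 'e \<Rightarrow> 'e \<Rightarrow> bool" where
  "edge_le T e e' \<longleftrightarrow> e \<in> edges T \<and> e' \<in> edges T \<and> (e, e') \<in> (up_rel T)\<^sup>*"

definition children :: "'e ptree \<Rightarrow> 'e \<Rightarrow> 'e set" where
  "children T e = {c \<in> edges T - {rootE T}. par T c = e}"

definition leaves :: "'e ptree \<Rightarrow> 'e set" where
  "leaves T = {e \<in> edges T. children T e = {}}"

definition is_shuffle :: "'s ptree \<Rightarrow> 't ptree \<Rightarrow> 'a ptree \<Rightarrow> ('a \<Rightarrow> 's \<times> 't) \<Rightarrow> bool" where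
  "is_shuffle S T A l \<longleftrightarrow> is_tree A
     \<and> (\<forall>a \<in> edges A. l a \<in> edges S \<times> edges T)
     \<and> l (rootE A) = (rootE S, rootE T)
     \<and> bij_betw l (leaves A) (leaves S \<times> leaves T)
     \<and> (\<forall>a \<in> edges A - leaves A.
          bij_betw l (children A a) (children S (fst (l a)) \<times> {snd (l a)})
        \<or> bij_betw l (children A a) ({fst (l a)} \<times> children T (snd (l a))))"

end

theory Submission
  imports Defs
begin


lemma children_up: "children T e = {c. (e,c) \<in> up_rel T}"
  unfolding children_def up_rel_def by auto

locale tr = fixes T :: "'e ptree" assumes tt: "is_tree T"
begin

abbreviation "up \<equiv> up_rel T"
abbreviation "E \<equiv> edges T"
abbreviation "r \<equiv> rootE T"

lemma up_iff: "(a,b) \<in> up \<longleftrightarrow> b \<in> E \<and> b \<noteq> r \<and> a = par T b"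
  unfolding up_rel_def by auto

lemma up_E: "(a,b) \<in> up \<Longrightarrow> a \<in> E \<and> b \<in> E"
  using tt unfolding is_tree_def up_iff by auto

lemma rtr_E1: "(a,b) \<in> up\<^sup>* \<Longrightarrow> b \<in> E \<Longrightarrow> a \<in> E"
  by (induction rule: converse_rtrancl_induct) (auto dest: up_E)

lemma rtr_E2: "(a,b) \<in> up\<^sup>* \<Longrightarrow> a \<in> E \<Longrightarrow> b \<in> E"
  by (induction rule: rtrancl_induct) (auto dest: up_E)

lemma root_reach: "e \<in> E \<Longrightarrow> (r,e) \<in> up\<^sup>*"
  using tt unfolding is_tree_def by auto

lemma finE: "finite E" using tt unfolding is_tree_def by auto

lemma rootE_in: "r \<in> E" using tt unfolding is_tree_def by auto

lemma acyc_aux: "(r,e) \<in> up\<^sup>* \<Longrightarrow> (e,e) \<notin> up\<^sup>+"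
proof (induction rule: rtrancl_induct)
  case base
  show ?case
  proof
    assume "(r,r) \<in> up\<^sup>+"
    then obtain w where "(w,r) \<in> up" by (meson tranclE)
    thus False by (simp add: up_iff)
  qed
next
  case (step w e)
  show ?case
  proof
    assume "(e,e) \<in> up\<^sup>+"
    then obtain v where v: "(e,v) \<in> up\<^sup>*" "(v,e) \<in> up"
      by (meson tranclD2)
    have "v = w" using v(2) step(2) by (simp add: up_iff)
    hence "(w,w) \<in> up\<^sup>+" using rtrancl_into_trancl2[OF step(2)] v(1) by simp
    thus False using step(3) by simp
  qed
qed

lemma acyc: "e \<in> E \<Longrightarrow> (e,e) \<notin> up\<^sup>+"
  using acyc_aux root_reach by blast

definition anc where "anc e = {a. (a,e) \<in> up\<^sup>*}"
definition dep where "dep e = card (anc e)"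

lemma anc_fin: "e \<in> E \<Longrightarrow> finite (anc e)"
  using finE rtr_E1 unfolding anc_def by (metis (no_types, lifting) finite_subset mem_Collect_eq subsetI)

lemma anc_step: assumes "(a,b) \<in> up" shows "anc b = insert b (anc a)"
proof -
  have "x \<in> anc b \<longleftrightarrow> x = b \<or> x \<in> anc a" for x
  proof
    assume "x \<in> anc b"
    hence "(x,b) \<in> up\<^sup>*" by (simp add: anc_def)
    thus "x = b \<or> x \<in> anc a"
    proof (cases rule: rtranclE)
      case (step w)
      hence "w = a" using assms by (simp add: up_iff)
      thus ?thesis using step by (simp add: anc_def)
    qed simp
  next
    assume "x = b \<or> x \<in> anc a"
    thus "x \<in> anc b" using assms unfolding anc_def by auto
  qed
  thus ?thesis by auto
qed

lemma dep_step: assumes "(a,b) \<in> up" shows "dep b = Suc (dep a)"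
proof -
  have bE: "a \<in> E" "b \<in> E" using up_E assms by auto
  have "b \<notin> anc a"
  proof
    assume "b \<in> anc a"
    hence "(b,b) \<in> up\<^sup>+" using assms unfolding anc_def by auto
    thus False using acyc bE by auto
  qed
  thus ?thesis unfolding dep_def anc_step[OF assms] using anc_fin bE by simp
qed

lemma dep_tr: "(a,b) \<in> up\<^sup>+ \<Longrightarrow> dep a < dep b"
  by (induction rule: trancl_induct) (auto simp: dep_step)

lemma dep_rtr: "(a,b) \<in> up\<^sup>* \<Longrightarrow> dep a \<le> dep b"
  by (metis dep_tr less_imp_le_nat order_refl rtranclD)

lemma dep_rtr_neq: "(a,b) \<in> up\<^sup>* \<Longrightarrow> a \<noteq> b \<Longrightarrow> dep a < dep b"
  by (metis dep_tr rtranclD)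

lemma anc_comp: "(b,e) \<in> up\<^sup>* \<Longrightarrow> (a,e) \<in> up\<^sup>* \<Longrightarrow> (a,b) \<in> up\<^sup>* \<or> (b,a) \<in> up\<^sup>*"
proof (induction arbitrary: a rule: rtrancl_induct)
  case base thus ?case by simp
next
  case (step w e)
  from step(4) show ?case
  proof (cases rule: rtranclE)
    case base thus ?thesis using step by (meson rtrancl.simps)
  next
    case (step v)
    hence "v = w" using \<open>(w,e) \<in> up\<close> by (simp add: up_iff)
    thus ?thesis using step \<open>_ \<Longrightarrow> _\<close> by blast
  qed
qed

lemma child_unique: "(s,c1) \<in> up \<Longrightarrow> (s,c2) \<in> up \<Longrightarrow> (c1,e) \<in> up\<^sup>* \<Longrightarrow> (c2,e) \<in> up\<^sup>* \<Longrightarrow> c1 = c2"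
  by (metis anc_comp dep_rtr_neq dep_step less_irrefl)

lemma toward: "(s,e) \<in> up\<^sup>* \<Longrightarrow> s \<noteq> e \<Longrightarrow> \<exists>c. (s,c) \<in> up \<and> (c,e) \<in> up\<^sup>*"
  by (meson converse_rtranclE)

lemma leaf_top: "children T s = {} \<Longrightarrow> (s,e) \<in> up\<^sup>* \<Longrightarrow> e = s"
  using toward children_up by fastforce

end



locale two = S: tr S + T: tr T for S :: "'s ptree" and T :: "'t ptree"
begin

definition le2 :: "'s \<times> 't \<Rightarrow> 's \<times> 't \<Rightarrow> bool" where
  "le2 x y \<longleftrightarrow> edge_le S (fst x) (fst y) \<and> edge_le T (snd x) (snd y)"

definition rho :: "'s \<times> 't \<Rightarrow> nat" where
  "rho x = S.dep (fst x) + T.dep (snd x)"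

lemma le2_iff: "le2 x y \<longleftrightarrow> fst x \<in> S.E \<and> snd x \<in> T.E \<and> (fst x, fst y) \<in> S.up\<^sup>* \<and> (snd x, snd y) \<in> T.up\<^sup>*"
  unfolding le2_def edge_le_def using S.rtr_E2 T.rtr_E2 by blast

lemma le2_trans: "le2 x y \<Longrightarrow> le2 y z \<Longrightarrow> le2 x z"
  unfolding le2_iff by (meson rtrancl_trans)

lemma le2_refl: "fst x \<in> S.E \<Longrightarrow> snd x \<in> T.E \<Longrightarrow> le2 x x"
  unfolding le2_iff by simp

lemma le2_mem: "le2 x y \<Longrightarrow> fst y \<in> S.E \<and> snd y \<in> T.E"
  unfolding le2_def edge_le_def by simp

lemma le2_rho: "le2 x y \<Longrightarrow> rho x \<le> rho y"
  unfolding le2_iff rho_def using S.dep_rtr T.dep_rtr by (simp add: add_mono)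

lemma le2_rho_neq: "le2 x y \<Longrightarrow> x \<noteq> y \<Longrightarrow> rho x < rho y"
proof -
  assume a: "le2 x y" "x \<noteq> y"
  hence h: "(fst x, fst y) \<in> S.up\<^sup>*" "(snd x, snd y) \<in> T.up\<^sup>*" unfolding le2_iff by auto
  have "fst x \<noteq> fst y \<or> snd x \<noteq> snd y" using a(2) by (simp add: prod_eq_iff)
  thus ?thesis using S.dep_rtr_neq[OF h(1)] T.dep_rtr_neq[OF h(2)] S.dep_rtr[OF h(1)] T.dep_rtr[OF h(2)]
    unfolding rho_def by auto
qed

end

locale cons = two S T for S :: "'s ptree" and T :: "'t ptree" +
  fixes d :: "'s \<times> 't \<Rightarrow> bool"
begin

definition expS where
  "expS x \<longleftrightarrow> children S (fst x) \<noteq> {} \<and> (d x \<or> children T (snd x) = {})"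

definition step :: "(('s \<times> 't) \<times> ('s \<times> 't)) set" where
  "step = {(x,y). fst x \<in> S.E \<and> snd x \<in> T.E \<and>
     (if expS x then (fst x, fst y) \<in> S.up \<and> snd y = snd x
      else (snd x, snd y) \<in> T.up \<and> fst y = fst x)}"

definition "root2 = (S.r, T.r)"
definition "R = {y. (root2, y) \<in> step\<^sup>*}"
definition "par0 y = (SOME x. x \<in> R \<and> (x,y) \<in> step)"
definition "A0 = \<lparr>edges = R, rootE = root2, par = par0\<rparr>"

lemma step_mem: "(x,y) \<in> step \<Longrightarrow> fst x \<in> S.E \<and> snd x \<in> T.E \<and> fst y \<in> S.E \<and> snd y \<in> T.E"
  unfolding step_def by (auto split: if_splits dest: S.up_E T.up_E)

lemma step_le2: "(x,y) \<in> step \<Longrightarrow> le2 x y"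
  unfolding le2_iff step_def by (auto split: if_splits)

lemma step_rho: "(x,y) \<in> step \<Longrightarrow> rho y = Suc (rho x)"
  unfolding rho_def step_def by (auto split: if_splits simp: S.dep_step T.dep_step)

lemma rtr_le2: "(x,y) \<in> step\<^sup>* \<Longrightarrow> fst x \<in> S.E \<Longrightarrow> snd x \<in> T.E \<Longrightarrow> le2 x y"
  by (induction rule: rtrancl_induct) (auto intro: le2_refl le2_trans step_le2)

lemma rtr_mem: "(x,y) \<in> step\<^sup>* \<Longrightarrow> fst x \<in> S.E \<Longrightarrow> snd x \<in> T.E \<Longrightarrow> fst y \<in> S.E \<and> snd y \<in> T.E"
  by (induction rule: rtrancl_induct) (auto dest: step_mem)

lemma rtr_rho: "(x,y) \<in> step\<^sup>* \<Longrightarrow> rho x \<le> rho y"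
  by (induction rule: rtrancl_induct) (auto dest: step_rho)

lemma tr_rho: "(x,y) \<in> step\<^sup>+ \<Longrightarrow> rho x < rho y"
  by (induction rule: trancl_induct) (auto dest: step_rho)

lemma determ: assumes "(z,w1) \<in> step" "(z,w2) \<in> step" "le2 w1 c" "le2 w2 c" shows "w1 = w2"
proof (cases "expS z")
  case True
  hence h: "(fst z, fst w1) \<in> S.up" "(fst z, fst w2) \<in> S.up" "snd w1 = snd z" "snd w2 = snd z"
    using assms(1,2) unfolding step_def by auto
  have "fst w1 = fst w2" using S.child_unique[OF h(1,2)] assms(3,4) unfolding le2_iff by auto
  thus ?thesis using h by (simp add: prod_eq_iff)
next
  case False
  hence h: "(snd z, snd w1) \<in> T.up" "(snd z, snd w2) \<in> T.up" "fst w1 = fst z" "fst w2 = fst z"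
    using assms(1,2) unfolding step_def by auto
  have "snd w1 = snd w2" using T.child_unique[OF h(1,2)] assms(3,4) unfolding le2_iff by auto
  thus ?thesis using h by (simp add: prod_eq_iff)
qed

lemma comp: "(z,a) \<in> step\<^sup>* \<Longrightarrow> le2 a c \<Longrightarrow> (z,b) \<in> step\<^sup>* \<Longrightarrow> le2 b c \<Longrightarrow>
   (a,b) \<in> step\<^sup>* \<or> (b,a) \<in> step\<^sup>*"
proof (induction rule: rtrancl_induct)
  case base thus ?case by simp
next
  case (step w a)
  have "le2 w c" using step_le2[OF step(2)] step(4) le2_trans by blast
  hence "(w,b) \<in> step\<^sup>* \<or> (b,w) \<in> step\<^sup>*" using step by blast
  thus ?case
  proof
    assume "(b,w) \<in> step\<^sup>*"
    thus ?thesis using step(2) by (meson rtrancl.rtrancl_into_rtrancl)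
  next
    assume "(w,b) \<in> step\<^sup>*"
    thus ?thesis
    proof (cases rule: converse_rtranclE)
      case base thus ?thesis using step(2) by auto
    next
      case (step w'')
      have "le2 w'' c" using rtr_le2[OF step(2)] step_mem[OF step(1)] \<open>le2 b c\<close> le2_trans by blast
      hence "w'' = a" using determ[OF step(1) \<open>(w,a) \<in> cons.step S T d\<close>] \<open>le2 a c\<close> by blast
      thus ?thesis using step by simp
    qed
  qed
qed

lemma root2_mem: "fst root2 \<in> S.E" "snd root2 \<in> T.E"
  unfolding root2_def using S.rootE_in T.rootE_in by auto

lemma R_mem: "y \<in> R \<Longrightarrow> fst y \<in> S.E \<and> snd y \<in> T.E"
  unfolding R_def using rtr_mem root2_mem by blast

lemma pred_unique: assumes "x1 \<in> R" "x2 \<in> R" "(x1,y) \<in> step" "(x2,y) \<in> step" shows "x1 = x2"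
proof (rule ccontr)
  assume ne: "x1 \<noteq> x2"
  have "(x1,x2) \<in> step\<^sup>* \<or> (x2,x1) \<in> step\<^sup>*"
    using comp[of root2 x1 y x2] assms step_le2 unfolding R_def by blast
  hence "rho x1 < rho x2 \<or> rho x2 < rho x1" using ne tr_rho by (metis rtranclD)
  thus False using step_rho[OF assms(3)] step_rho[OF assms(4)] by auto
qed


lemma R_closed: "x \<in> R \<Longrightarrow> (x,y) \<in> step\<^sup>* \<Longrightarrow> y \<in> R"
  unfolding R_def by (meson mem_Collect_eq rtrancl_trans)

lemma root2_R: "root2 \<in> R" unfolding R_def by simp

lemma par0_good: assumes "y \<in> R" "y \<noteq> root2" shows "par0 y \<in> R \<and> (par0 y, y) \<in> step"
proof -
  have "(root2, y) \<in> step\<^sup>*" using assms(1) unfolding R_def by simp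
  then obtain x where "(root2, x) \<in> step\<^sup>*" "(x,y) \<in> step" using assms(2)
    by (metis rtranclE)
  hence "\<exists>x. x \<in> R \<and> (x,y) \<in> step" unfolding R_def by blast
  thus ?thesis unfolding par0_def by (rule someI_ex)
qed

lemma step_R: assumes "x \<in> R" "(x,y) \<in> step" shows "y \<in> R" "y \<noteq> root2" "par0 y = x"
proof -
  show yR: "y \<in> R" using R_closed assms by blast
  have "rho root2 \<le> rho x" using assms(1) rtr_rho unfolding R_def by blast
  thus yr: "y \<noteq> root2" using step_rho[OF assms(2)] by auto
  show "par0 y = x" using par0_good[OF yR yr] pred_unique assms by blast
qed

lemma up_A0: "up_rel A0 = {(x,y). x \<in> R \<and> (x,y) \<in> step}"
proof -
  have eq: "(a,b) \<in> up_rel A0 \<longleftrightarrow> a \<in> R \<and> (a,b) \<in> step" for a b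
  proof
    assume "(a,b) \<in> up_rel A0"
    hence b: "b \<in> R" "b \<noteq> root2" "a = par0 b" unfolding up_rel_def A0_def by (simp_all add: A0_def, auto)
    from par0_good[OF b(1) b(2)] b(3) show "a \<in> R \<and> (a,b) \<in> step" by simp
  next
    assume h: "a \<in> R \<and> (a,b) \<in> step"
    hence b: "b \<in> R" "b \<noteq> root2" "par0 b = a" using step_R[of a b] by auto
    have "(par0 b, b) \<in> up_rel A0" unfolding up_rel_def A0_def ptree.simps using b(1,2) by blast
    thus "(a,b) \<in> up_rel A0" using b(3) by simp
  qed
  show ?thesis
  proof (rule set_eqI)
    fix p show "p \<in> up_rel A0 \<longleftrightarrow> p \<in> {(x,y). x \<in> R \<and> (x,y) \<in> step}"
      using eq[of "fst p" "snd p"] by (cases p) simp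
  qed
qed

lemma rtr_A0: "(a,b) \<in> step\<^sup>* \<Longrightarrow> a \<in> R \<Longrightarrow> (a,b) \<in> (up_rel A0)\<^sup>*"
proof (induction rule: rtrancl_induct)
  case base thus ?case by simp
next
  case (step w b)
  have "w \<in> R" using R_closed step by blast
  hence "(w,b) \<in> up_rel A0" using step(2) unfolding up_A0 by blast
  thus ?case using step by (meson rtrancl.rtrancl_into_rtrancl)
qed

lemma finR: "finite R"
proof -
  have "R \<subseteq> S.E \<times> T.E" using R_mem by (auto simp: mem_Times_iff)
  thus ?thesis using S.finE T.finE by (meson finite_SigmaI finite_subset)
qed

lemma tree_A0: "is_tree A0"
  unfolding is_tree_def
proof (intro conjI ballI)
  show "finite (edges A0)" using finR by (simp add: A0_def)
  show "rootE A0 \<in> edges A0" using root2_R by (simp add: A0_def)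
  fix c assume "c \<in> edges A0 - {rootE A0}"
  thus "par A0 c \<in> edges A0" using par0_good by (simp add: A0_def)
next
  fix e assume "e \<in> edges A0"
  thus "(rootE A0, e) \<in> (up_rel A0)\<^sup>*" using rtr_A0 root2_R by (simp add: A0_def R_def)
qed

lemma step_from: assumes "fst x \<in> S.E" "snd x \<in> T.E"
  shows "{y. (x,y) \<in> step} = (if expS x then children S (fst x) \<times> {snd x} else {fst x} \<times> children T (snd x))"
  using assms unfolding step_def children_up by (auto simp: mem_Times_iff)

lemma children_A0: "a \<in> R \<Longrightarrow> children A0 a = {y. (a,y) \<in> step}"
  unfolding children_up up_A0 by blast

lemma children_A0_empty: assumes "a \<in> R"
  shows "children A0 a = {} \<longleftrightarrow> children S (fst a) = {} \<and> children T (snd a) = {}"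
  using children_A0[OF assms] step_from R_mem[OF assms] unfolding expS_def by auto

lemma leaf_reach: assumes "fst y \<in> leaves S" "snd y \<in> leaves T"
  shows "le2 x y \<Longrightarrow> (x,y) \<in> step\<^sup>*"
proof (induction x rule: measure_induct_rule[of "\<lambda>x. rho y - rho x"])
  case (less x)
  show ?case
  proof (cases "x = y")
    case True thus ?thesis by simp
  next
    case False
    have xm: "fst x \<in> S.E" "snd x \<in> T.E" and h: "(fst x, fst y) \<in> S.up\<^sup>*" "(snd x, snd y) \<in> T.up\<^sup>*"
      using less(2) unfolding le2_iff by auto
    have ly: "children S (fst y) = {}" "children T (snd y) = {}" using assms unfolding leaves_def by auto
    obtain x' where x': "(x,x') \<in> step" "le2 x' y"
    proof (cases "expS x")
      case True
      hence "children S (fst x) \<noteq> {}" unfolding expS_def by auto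
      hence "fst x \<noteq> fst y" using ly by auto
      then obtain c where c: "(fst x, c) \<in> S.up" "(c, fst y) \<in> S.up\<^sup>*" using S.toward h by blast
      have "(x, (c, snd x)) \<in> step" using True c xm unfolding step_def by simp
      moreover have "le2 (c, snd x) y" using c h xm S.up_E unfolding le2_iff by auto
      ultimately show ?thesis by (rule that)
    next
      case False
      show ?thesis
      proof (cases "children T (snd x) = {}")
        case True
        hence "children S (fst x) = {}" using False unfolding expS_def by auto
        hence "fst y = fst x" using S.leaf_top h(1) by blast
        moreover have "snd y = snd x" using T.leaf_top h(2) True by blast
        ultimately have "x = y" by (simp add: prod_eq_iff)
        thus ?thesis using \<open>x \<noteq> y\<close> by simp
      next
        case ne: False
        hence "snd x \<noteq> snd y" using ly by auto
        then obtain c where c: "(snd x, c) \<in> T.up" "(c, snd y) \<in> T.up\<^sup>*" using T.toward h by blast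
        have "(x, (fst x, c)) \<in> step" using False c xm unfolding step_def by simp
        moreover have "le2 (fst x, c) y" using c h xm T.up_E unfolding le2_iff by auto
        ultimately show ?thesis by (rule that)
      qed
    qed
    have "rho y - rho x' < rho y - rho x" using step_rho[OF x'(1)] le2_rho[OF x'(2)] by auto
    hence "(x',y) \<in> step\<^sup>*" using less(1) x'(2) by blast
    thus ?thesis using x'(1) by (meson converse_rtrancl_into_rtrancl)
  qed
qed

lemma leaves_A0: "leaves A0 = leaves S \<times> leaves T"
proof -
  have "a \<in> leaves A0 \<longleftrightarrow> a \<in> leaves S \<times> leaves T" for a
  proof
    assume "a \<in> leaves A0"
    hence "a \<in> R" "children A0 a = {}" unfolding leaves_def A0_def by auto
    thus "a \<in> leaves S \<times> leaves T" using children_A0_empty R_mem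
      unfolding leaves_def A0_def by (auto simp: mem_Times_iff)
  next
    assume a: "a \<in> leaves S \<times> leaves T"
    hence "le2 root2 a" unfolding le2_iff root2_def leaves_def
      using S.root_reach T.root_reach S.rootE_in T.rootE_in by (auto simp: mem_Times_iff)
    hence "a \<in> R" using leaf_reach a unfolding R_def by (auto simp: mem_Times_iff)
    thus "a \<in> leaves A0" using children_A0_empty a unfolding leaves_def A0_def
      by (auto simp: mem_Times_iff)
  qed
  thus ?thesis by (intro set_eqI) blast
qed

lemma shuffle_A0: "is_shuffle S T A0 id"
  unfolding is_shuffle_def
proof (intro conjI ballI)
  show "is_tree A0" by (rule tree_A0)
  show "\<And>a. a \<in> edges A0 \<Longrightarrow> id a \<in> S.E \<times> T.E" using R_mem by (auto simp: A0_def mem_Times_iff)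
  show "id (rootE A0) = (S.r, T.r)" by (simp add: A0_def root2_def)
  show "bij_betw id (leaves A0) (leaves S \<times> leaves T)" using leaves_A0 by simp
  fix a assume "a \<in> edges A0 - leaves A0"
  hence aR: "a \<in> R" by (simp add: A0_def)
  show "bij_betw id (children A0 a) (children S (fst (id a)) \<times> {snd (id a)}) \<or>
        bij_betw id (children A0 a) ({fst (id a)} \<times> children T (snd (id a)))"
  proof (cases "expS a")
    case True
    hence "children A0 a = children S (fst a) \<times> {snd a}"
      using R_mem[OF aR] True by (simp add: children_A0[OF aR] step_from)
    thus ?thesis by simp
  next
    case False
    hence "children A0 a = {fst a} \<times> children T (snd a)"
      using R_mem[OF aR] False by (simp add: children_A0[OF aR] step_from)
    thus ?thesis by simp
  qed
qed

end



definition X2 :: "'s ptree \<Rightarrow> 't ptree \<Rightarrow> ('s \<times> 't) set \<Rightarrow> 's \<times> 't \<Rightarrow> ('s \<times> 't) set" where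
  "X2 S T C x = {c\<in>C. (edge_le S (fst x) (fst c) \<and> edge_le T (snd x) (snd c)) \<and> c \<noteq> x}"
definition tgt :: "'s ptree \<Rightarrow> 't ptree \<Rightarrow> ('s \<times> 't) set \<Rightarrow> 's \<times> 't \<Rightarrow> 's \<times> 't" where
  "tgt S T C x = (SOME c. c \<in> X2 S T C x \<and> (\<forall>c'\<in>X2 S T C x. edge_le S (fst c) (fst c') \<and> edge_le T (snd c) (snd c')))"
definition dd :: "'s ptree \<Rightarrow> 't ptree \<Rightarrow> ('s \<times> 't) set \<Rightarrow> 's \<times> 't \<Rightarrow> bool" where
  "dd S T C x = (X2 S T C x \<noteq> {} \<and> fst x \<noteq> fst (tgt S T C x))"

locale ch = cons S T "dd S T C" for S :: "'s ptree" and T :: "'t ptree" and C +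
  assumes CE: "C \<subseteq> edges S \<times> edges T"
    and chn: "\<forall>x \<in> C. \<forall>y \<in> C.
           (edge_le S (fst x) (fst y) \<and> edge_le T (snd x) (snd y))
         \<or> (edge_le S (fst y) (fst x) \<and> edge_le T (snd y) (snd x))"
begin

lemma X2_le: "X2 S T C x = {c\<in>C. le2 x c \<and> c \<noteq> x}"
  unfolding X2_def le2_def by simp

lemma chain': "x \<in> C \<Longrightarrow> y \<in> C \<Longrightarrow> le2 x y \<or> le2 y x"
  using chn unfolding le2_def by blast

lemma tgt_prop: assumes "X2 S T C x \<noteq> {}"
  shows "tgt S T C x \<in> X2 S T C x \<and> (\<forall>c'\<in>X2 S T C x. le2 (tgt S T C x) c')"
proof -
  obtain k where "k \<in> X2 S T C x" using assms by blast
  then obtain c0 where c0: "c0 \<in> X2 S T C x" "\<And>y. y \<in> X2 S T C x \<Longrightarrow> rho c0 \<le> rho y"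
    using ex_has_least_nat[of "\<lambda>c. c \<in> X2 S T C x" k rho] by blast
  have c0C: "c0 \<in> C" using c0(1) unfolding X2_le by auto
  have "\<forall>c'\<in>X2 S T C x. le2 c0 c'"
  proof
    fix c' assume c': "c' \<in> X2 S T C x"
    hence "c' \<in> C" unfolding X2_le by auto
    hence "le2 c0 c' \<or> le2 c' c0" using chain' c0C by blast
    thus "le2 c0 c'"
    proof
      assume h: "le2 c' c0"
      show "le2 c0 c'"
      proof (cases "c' = c0")
        case True thus ?thesis using c0C CE le2_refl by (auto simp: mem_Times_iff)
      next
        case False thus ?thesis using le2_rho_neq[OF h] c0(2)[OF c'] by auto
      qed
    qed
  qed
  hence "\<exists>c. c \<in> X2 S T C x \<and> (\<forall>c'\<in>X2 S T C x. le2 c c')" using c0(1) by blast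
  hence "\<exists>c. c \<in> X2 S T C x \<and> (\<forall>c'\<in>X2 S T C x. edge_le S (fst c) (fst c') \<and> edge_le T (snd c) (snd c'))"
    unfolding le2_def .
  from someI_ex[OF this] show ?thesis unfolding tgt_def[symmetric] le2_def .
qed

lemma chain_reach: assumes "c \<in> C"
  shows "le2 x c \<Longrightarrow> (x,c) \<in> step\<^sup>*"
proof (induction x rule: measure_induct_rule[of "\<lambda>x. rho c - rho x"])
  case (less x)
  show ?case
  proof (cases "x = c")
    case True thus ?thesis by simp
  next
    case False
    have xm: "fst x \<in> S.E" "snd x \<in> T.E" using less(2) unfolding le2_iff by auto
    have ne: "X2 S T C x \<noteq> {}" using assms less(2) False unfolding X2_le by blast
    define c' where "c' = tgt S T C x"
    have cX: "c \<in> X2 S T C x" using assms less(2) False unfolding X2_le by blast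
    have tp: "c' \<in> X2 S T C x" "\<forall>c''\<in>X2 S T C x. le2 c' c''" using tgt_prop[OF ne] unfolding c'_def by auto
    have c': "le2 x c'" "c' \<noteq> x" "le2 c' c"
      using tp(1) unfolding X2_le apply blast
      using tp(1) unfolding X2_le apply blast
      using tp(2) cX by blast
    have h: "(fst x, fst c') \<in> S.up\<^sup>*" "(snd x, snd c') \<in> T.up\<^sup>*" using c'(1) unfolding le2_iff by auto
    obtain x' where x': "(x,x') \<in> step" "le2 x' c'"
    proof (cases "fst x = fst c'")
      case False
      then obtain cc where cc: "(fst x, cc) \<in> S.up" "(cc, fst c') \<in> S.up\<^sup>*" using S.toward h by blast
      have "dd S T C x" unfolding dd_def using ne False c'_def by simp
      moreover have "children S (fst x) \<noteq> {}" using cc(1) unfolding children_up by auto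
      ultimately have "expS x" unfolding expS_def by simp
      hence "(x, (cc, snd x)) \<in> step" using cc xm unfolding step_def by simp
      moreover have "le2 (cc, snd x) c'" using cc h xm S.up_E unfolding le2_iff by auto
      ultimately show ?thesis by (rule that)
    next
      case True
      hence "snd x \<noteq> snd c'" using c'(2) by (simp add: prod_eq_iff)
      then obtain cc where cc: "(snd x, cc) \<in> T.up" "(cc, snd c') \<in> T.up\<^sup>*" using T.toward h by blast
      have "\<not> dd S T C x" unfolding dd_def using True c'_def by simp
      moreover have "children T (snd x) \<noteq> {}" using cc(1) unfolding children_up by auto
      ultimately have "\<not> expS x" unfolding expS_def by simp
      hence "(x, (fst x, cc)) \<in> step" using cc xm unfolding step_def by simp
      moreover have "le2 (fst x, cc) c'" using cc h xm T.up_E unfolding le2_iff by auto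
      ultimately show ?thesis by (rule that)
    qed
    have x'c: "le2 x' c" using x'(2) c'(3) le2_trans by blast
    have "rho c - rho x' < rho c - rho x" using step_rho[OF x'(1)] le2_rho[OF x'c] by auto
    hence "(x',c) \<in> step\<^sup>*" using less(1) x'c by blast
    thus ?thesis using x'(1) by (meson converse_rtrancl_into_rtrancl)
  qed
qed

lemma final: "is_shuffle S T A0 id \<and> C \<subseteq> edges A0 \<and> (\<forall>a\<in>C. \<forall>b\<in>C. edge_le A0 a b \<or> edge_le A0 b a)"
proof -
  have CR: "C \<subseteq> R"
  proof
    fix c assume c: "c \<in> C"
    hence "fst c \<in> S.E" "snd c \<in> T.E" using CE by auto
    hence "le2 root2 c" unfolding le2_iff root2_def
      using S.root_reach T.root_reach S.rootE_in T.rootE_in by auto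
    thus "c \<in> R" using chain_reach c unfolding R_def by blast
  qed
  have EA: "edge_le A0 a b" if "a \<in> C" "b \<in> C" "le2 a b" for a b
  proof -
    have "(a,b) \<in> step\<^sup>*" using chain_reach that by blast
    hence "(a,b) \<in> (up_rel A0)\<^sup>*" using rtr_A0 CR that by blast
    moreover have "a \<in> R" "b \<in> R" using CR that by blast+
    ultimately show ?thesis unfolding edge_le_def by (simp add: A0_def)
  qed
  have "\<forall>a\<in>C. \<forall>b\<in>C. edge_le A0 a b \<or> edge_le A0 b a" using EA chain' by blast
  moreover have "edges A0 = R" by (simp add: A0_def)
  ultimately show ?thesis using shuffle_A0 CR by simp
qed

end



lemma bij_transfer: assumes "inj_on f L" "\<And>x. x \<in> L \<Longrightarrow> h (f x) = l x" "bij_betw l L X"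
  shows "bij_betw h (f ` L) X"
proof -
  have "bij_betw (h \<circ> f) L X" using assms(3) bij_betw_cong[of L "h \<circ> f" l X] assms(2) by simp
  moreover have "bij_betw f L (f ` L)" using assms(1) by (simp add: inj_on_imp_bij_betw)
  ultimately show ?thesis using bij_betw_comp_iff by blast
qed

lemma up_img: "up_rel A = (\<lambda>c. (par A c, c)) ` (edges A - {rootE A})"
  unfolding up_rel_def by auto

lemma transport:
  fixes A :: "'a ptree" and f :: "'a \<Rightarrow> 'b"
  assumes sh: "is_shuffle S T A l" and inj: "inj_on f (edges A)"
    and DA: "D \<subseteq> edges A" and chD: "\<forall>a\<in>D. \<forall>b\<in>D. edge_le A a b \<or> edge_le A b a"
  defines "g \<equiv> inv_into (edges A) f"
  defines "A' \<equiv> \<lparr>edges = f ` edges A, rootE = f (rootE A), par = f \<circ> par A \<circ> g\<rparr>"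
  shows "is_shuffle S T A' (l \<circ> g) \<and> f ` D \<subseteq> edges A' \<and>
    (\<forall>a\<in>f ` D. \<forall>b\<in>f ` D. edge_le A' a b \<or> edge_le A' b a) \<and> (l \<circ> g) ` f ` D = l ` D"
proof -
  let ?E = "edges A" and ?r = "rootE A"
  have tA: "is_tree A" using sh unfolding is_shuffle_def by auto
  interpret A: tr A by (unfold_locales) (rule tA)
  have gf: "x \<in> ?E \<Longrightarrow> g (f x) = x" for x unfolding g_def using inj by simp
  have eA': "edges A' = f ` ?E" "rootE A' = f ?r" unfolding A'_def by auto
  have parA': "x \<in> ?E \<Longrightarrow> par A' (f x) = f (par A x)" for x unfolding A'_def using gf by simp
  let ?M = "(\<lambda>(a,b). (f a, f b)) ` up_rel A"
  have upA': "up_rel A' = ?M"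
  proof -
    have "f ` ?E - {f ?r} = f ` (?E - {?r})" using inj A.rootE_in by (simp add: inj_on_image_set_diff)
    hence "up_rel A' = (\<lambda>c'. (par A' c', c')) ` (f ` (?E - {?r}))" unfolding up_img eA' by simp
    also have "\<dots> = (\<lambda>c. (f (par A c), f c)) ` (?E - {?r})" unfolding image_image using parA' by auto
    also have "\<dots> = ?M" unfolding up_img image_image by simp
    finally show ?thesis .
  qed
  have fwd: "(a,b) \<in> (up_rel A)\<^sup>* \<Longrightarrow> (f a, f b) \<in> ?M\<^sup>*" for a b
  proof (induction rule: rtrancl_induct)
    case base thus ?case by simp
  next
    case (step w b)
    hence "(f w, f b) \<in> ?M" by force
    thus ?case using step(3) by (meson rtrancl.rtrancl_into_rtrancl)
  qed
  have bwd0: "(u,v) \<in> ?M\<^sup>* \<Longrightarrow> u = v \<or> (\<exists>a b. a \<in> ?E \<and> b \<in> ?E \<and> u = f a \<and> v = f b \<and> (a,b) \<in> (up_rel A)\<^sup>*)" for u v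
  proof (induction rule: rtrancl_induct)
    case base thus ?case by simp
  next
    case (step w v)
    then obtain a' b' where ab: "(a',b') \<in> up_rel A" "w = f a'" "v = f b'" by auto
    have abE: "a' \<in> ?E" "b' \<in> ?E" using A.up_E ab(1) by auto
    from step(3) show ?case
    proof
      assume "u = w" thus ?thesis using ab abE by blast
    next
      assume "\<exists>a b. a \<in> ?E \<and> b \<in> ?E \<and> u = f a \<and> w = f b \<and> (a,b) \<in> (up_rel A)\<^sup>*"
      then obtain a b where h: "a \<in> ?E" "b \<in> ?E" "u = f a" "w = f b" "(a,b) \<in> (up_rel A)\<^sup>*" by blast
      have "b = a'" using h(2,4) abE ab(2) inj by (simp add: inj_on_eq_iff)
      hence "(a,b') \<in> (up_rel A)\<^sup>*" using h(5) ab(1) by (meson rtrancl.rtrancl_into_rtrancl)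
      thus ?thesis using h(1,3) abE(2) ab(3) by blast
    qed
  qed
  have rtr: "a \<in> ?E \<Longrightarrow> b \<in> ?E \<Longrightarrow> (f a, f b) \<in> (up_rel A')\<^sup>* \<longleftrightarrow> (a,b) \<in> (up_rel A)\<^sup>*" for a b
  proof
    assume ab: "a \<in> ?E" "b \<in> ?E" and "(f a, f b) \<in> (up_rel A')\<^sup>*"
    hence "f a = f b \<or> (\<exists>a' b'. a' \<in> ?E \<and> b' \<in> ?E \<and> f a = f a' \<and> f b = f b' \<and> (a',b') \<in> (up_rel A)\<^sup>*)"
      using bwd0 upA' by simp
    thus "(a,b) \<in> (up_rel A)\<^sup>*" using ab inj by (auto simp: inj_on_eq_iff)
  next
    assume "(a,b) \<in> (up_rel A)\<^sup>*" thus "(f a, f b) \<in> (up_rel A')\<^sup>*" using fwd upA' by simp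
  qed
  have eleq: "a \<in> ?E \<Longrightarrow> b \<in> ?E \<Longrightarrow> edge_le A' (f a) (f b) \<longleftrightarrow> edge_le A a b" for a b
    unfolding edge_le_def eA' using rtr by auto
  have chA': "a \<in> ?E \<Longrightarrow> children A' (f a) = f ` children A a" for a
  proof -
    assume aE: "a \<in> ?E"
    have "c' \<in> children A' (f a) \<longleftrightarrow> c' \<in> f ` children A a" for c'
    proof
      assume "c' \<in> children A' (f a)"
      hence "(f a, c') \<in> ?M" unfolding children_up upA' by simp
      then obtain x y where xy: "(x,y) \<in> up_rel A" "f a = f x" "c' = f y" by auto
      have "x = a" using xy(1,2) A.up_E aE inj by (auto simp: inj_on_eq_iff)
      thus "c' \<in> f ` children A a" using xy unfolding children_up by auto
    next
      assume "c' \<in> f ` children A a"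
      then obtain y where "(a,y) \<in> up_rel A" "c' = f y" unfolding children_up by auto
      thus "c' \<in> children A' (f a)" unfolding children_up upA' by force
    qed
    thus ?thesis by blast
  qed
  have lvA': "leaves A' = f ` leaves A"
  proof -
    have "x \<in> leaves A' \<longleftrightarrow> x \<in> f ` leaves A" for x
    proof
      assume "x \<in> leaves A'"
      then obtain e where e: "e \<in> ?E" "x = f e" "children A' (f e) = {}" unfolding leaves_def eA' by auto
      thus "x \<in> f ` leaves A" using chA' unfolding leaves_def by auto
    next
      assume "x \<in> f ` leaves A"
      then obtain e where e: "e \<in> ?E" "x = f e" "children A e = {}" unfolding leaves_def by auto
      thus "x \<in> leaves A'" using chA' unfolding leaves_def eA' by auto
    qed
    thus ?thesis by blast
  qed
  have lg: "x \<in> ?E \<Longrightarrow> (l \<circ> g) (f x) = l x" for x using gf by simp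
  have treeA': "is_tree A'"
    unfolding is_tree_def
  proof (intro conjI ballI)
    show "finite (edges A')" using A.finE eA' by simp
    show "rootE A' \<in> edges A'" using A.rootE_in eA' by simp
  next
    fix c assume "c \<in> edges A' - {rootE A'}"
    then obtain x where x: "x \<in> ?E" "x \<noteq> ?r" "c = f x" using eA' by auto
    hence "par A x \<in> ?E" using tA unfolding is_tree_def by auto
    thus "par A' c \<in> edges A'" using x parA' eA' by simp
  next
    fix e assume "e \<in> edges A'"
    then obtain x where "x \<in> ?E" "e = f x" using eA' by auto
    thus "(rootE A', e) \<in> (up_rel A')\<^sup>*" using rtr A.root_reach A.rootE_in eA' by simp
  qed
  have shA': "is_shuffle S T A' (l \<circ> g)"
    unfolding is_shuffle_def
  proof (intro conjI ballI)
    show "is_tree A'" by (rule treeA')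
    fix a assume "a \<in> edges A'"
    then obtain x where "x \<in> ?E" "a = f x" using eA' by auto
    thus "(l \<circ> g) a \<in> edges S \<times> edges T" using lg sh unfolding is_shuffle_def by auto
  next
    show "(l \<circ> g) (rootE A') = (rootE S, rootE T)" using lg A.rootE_in eA' sh unfolding is_shuffle_def by simp
    show "bij_betw (l \<circ> g) (leaves A') (leaves S \<times> leaves T)"
      unfolding lvA' using sh unfolding is_shuffle_def
      by (intro bij_transfer[where l=l]) (auto intro: inj_on_subset[OF inj] simp: leaves_def gf)
  next
    fix a assume "a \<in> edges A' - leaves A'"
    then obtain x where x: "x \<in> ?E" "a = f x" "x \<notin> leaves A" using eA' lvA' by auto
    have sub: "children A x \<subseteq> ?E" unfolding children_def by auto
    have inj2: "inj_on f (children A x)" using inj_on_subset[OF inj sub] .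
    have lg2: "\<And>y. y \<in> children A x \<Longrightarrow> (l \<circ> g) (f y) = l y" using lg sub by blast
    have "bij_betw l (children A x) (children S (fst (l x)) \<times> {snd (l x)}) \<or>
          bij_betw l (children A x) ({fst (l x)} \<times> children T (snd (l x)))"
      using sh x unfolding is_shuffle_def by auto
    thus "bij_betw (l \<circ> g) (children A' a) (children S (fst ((l \<circ> g) a)) \<times> {snd ((l \<circ> g) a)}) \<or>
        bij_betw (l \<circ> g) (children A' a) ({fst ((l \<circ> g) a)} \<times> children T (snd ((l \<circ> g) a)))"
      unfolding x(2) chA'[OF x(1)] lg[OF x(1)] using bij_transfer[where h="l \<circ> g" and l=l, OF inj2 lg2] by blast
  qed
  have "\<forall>a\<in>f ` D. \<forall>b\<in>f ` D. edge_le A' a b \<or> edge_le A' b a"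
    using chD DA eleq by (smt (verit, best) image_iff subsetD)
  moreover have "(l \<circ> g) ` f ` D = l ` D" using DA lg by (force simp: image_image)
  moreover have "f ` D \<subseteq> edges A'" using DA eA' by auto
  ultimately show ?thesis using shA' by blast
qed



theorem mainTheorem14:
  fixes S :: "'s ptree" and T :: "'t ptree" and C :: "('s \<times> 't) set"
  assumes "is_tree S" and "is_tree T"
    and "C \<subseteq> edges S \<times> edges T" and "C \<noteq> {}"
    and "\<forall>x \<in> C. \<forall>y \<in> C.
           (edge_le S (fst x) (fst y) \<and> edge_le T (snd x) (snd y))
         \<or> (edge_le S (fst y) (fst x) \<and> edge_le T (snd y) (snd x))"
  shows "\<exists>(A :: nat ptree) l. is_shuffle S T A l \<and>
           (\<exists>D \<subseteq> edges A. (\<forall>a \<in> D. \<forall>b \<in> D. edge_le A a b \<or> edge_le A b a) \<and> l ` D = C)"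
proof -
  interpret S: tr S by unfold_locales (rule assms(1))
  interpret T: tr T by unfold_locales (rule assms(2))
  interpret ch S T C by unfold_locales (rule assms(3), rule assms(5))
  have F: "is_shuffle S T A0 id" "C \<subseteq> edges A0" "\<forall>a\<in>C. \<forall>b\<in>C. edge_le A0 a b \<or> edge_le A0 b a"
    using final by auto
  have "finite (edges A0)" using F(1) unfolding is_shuffle_def is_tree_def by auto
  then obtain h :: "'s \<times> 't \<Rightarrow> nat" where "bij_betw h (edges A0) {0..<card (edges A0)}"
    using ex_bij_betw_finite_nat by blast
  hence inj: "inj_on h (edges A0)" by (rule bij_betw_imp_inj_on)
  note X = transport[OF F(1) inj F(2) F(3)]
  show ?thesis
  proof (intro exI conjI)
    show "is_shuffle S T \<lparr>edges = h ` edges A0, rootE = h (rootE A0), par = h \<circ> par A0 \<circ> inv_into (edges A0) h\<rparr>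
       (id \<circ> inv_into (edges A0) h)" using X by blast
    show "h ` C \<subseteq> edges \<lparr>edges = h ` edges A0, rootE = h (rootE A0), par = h \<circ> par A0 \<circ> inv_into (edges A0) h\<rparr>"
      using X by blast
    show "\<forall>a\<in>h ` C. \<forall>b\<in>h ` C. edge_le \<lparr>edges = h ` edges A0, rootE = h (rootE A0), par = h \<circ> par A0 \<circ> inv_into (edges A0) h\<rparr> a b \<or>
      edge_le \<lparr>edges = h ` edges A0, rootE = h (rootE A0), par = h \<circ> par A0 \<circ> inv_into (edges A0) h\<rparr> b a"
      using X by blast
    show "(id \<circ> inv_into (edges A0) h) ` h ` C = C" using X by simp
  qed
qed

end
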